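(* For every integer $a\geq 1$, $$\sum_{n=1}^{\infty}\frac{(-1)^n\widetilde H_{n-1}^{(2a)}}{n}=\frac12\zeta(2a+1)-\Big(a+\frac12\Big)\widetilde\zeta(2a+1)+\ln 2\,\zeta(2a)+\sum_{j=1}^{a-1}\widetilde\zeta(2j+1)\zeta(2a-2j),$$ where an empty sum equals $0$.
   Context: For integers $b\geq 1$: $\widetilde H_0^{(b)}=0$ and $\widetilde H_n^{(b)}=\sum_{k=1}^{n}\frac{(-1)^{k-1}}{k^b}$ for $n\geq 1$. For real $s>1$, $\widetilde\zeta(s)=\sum_{n\geq 1}\frac{(-1)^{n-1}}{n^s}$, and $\zeta$ is the Riemann zeta function. The series on the left converges (conditionally). *)

theory Defs
  imports "HOL-Analysis.Analysis"
begin

definition altH :: "nat \<Rightarrow> nat \<Rightarrow> real" where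
  "altH b n = (\<Sum>k=1..n. (-1) ^ (k - 1) / (real k) ^ b)"

definition zetaN :: "nat \<Rightarrow> real" where
  "zetaN s = (\<Sum>n. 1 / (real (Suc n)) ^ s)"

definition altzetaN :: "nat \<Rightarrow> real" where
  "altzetaN s = (\<Sum>n. (-1) ^ n / (real (Suc n)) ^ s)"

end

theory Submission
  imports Defs
begin

lemma altH_alt: "altH b n = (\<Sum>t<n. (-1)^t / real (Suc t)^b)"
  unfolding altH_def using sum.atLeast1_atMost_eq[of "\<lambda>k. (-1)^(k-1) / real k ^ b" n]
  by simp

lemma summable_zeta: "r \<ge> 2 \<Longrightarrow> summable (\<lambda>n. 1 / real (Suc n)^r)"
proof -
  assume r: "r \<ge> 2"
  have "summable (\<lambda>n. inverse (real n ^ r))" using inverse_power_summable[OF r] by simp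
  hence "summable (\<lambda>n. inverse (real (Suc n) ^ r))" by (subst summable_Suc_iff)
  thus ?thesis by (simp add: divide_inverse)
qed

lemma zeta_sums: "r \<ge> 2 \<Longrightarrow> (\<lambda>n. 1 / real (Suc n)^r) sums zetaN r"
  unfolding zetaN_def using summable_zeta by (simp add: summable_sums)

lemma summable_eta: "r \<ge> 2 \<Longrightarrow> summable (\<lambda>n. (-1)^n / real (Suc n)^r)"
  by (rule summable_comparison_test'[OF summable_zeta[of r]]) (auto simp: abs_mult power_abs)

lemma eta_sums: "r \<ge> 2 \<Longrightarrow> (\<lambda>n. (-1)^n / real (Suc n)^r) sums altzetaN r"
  unfolding altzetaN_def using summable_eta by (simp add: summable_sums)

lemma eta_sums': "r \<ge> 2 \<Longrightarrow> (\<lambda>n. (-1)^(Suc n) / real (Suc n)^r) sums (- altzetaN r)"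
  using sums_minus[OF eta_sums] by simp

lemma altH1_lim: "(\<lambda>n. altH 1 n) \<longlonglongrightarrow> ln 2"
  using alternating_harmonic_series_sums unfolding sums_def altH_alt by simp

lemma altH_lim: "r \<ge> 2 \<Longrightarrow> (\<lambda>n. altH r n) \<longlonglongrightarrow> altzetaN r"
  using eta_sums unfolding sums_def altH_alt by simp

lemma altH1_Suc: "altH 1 (Suc n) = altH 1 n + (-1)^n / real (Suc n)"
  unfolding altH_alt by simp

lemma altH_Suc: "altH r (Suc n) = altH r n + (-1)^n / real (Suc n)^r"
  unfolding altH_alt by simp

lemma stepA_partial:
  "(\<Sum>m<N. (-1) ^ (Suc m) * altH s m / real (Suc m)) =
     (\<Sum>k<N. (-1)^k / real (Suc k)^s * altH 1 (Suc k)) - altH 1 N * altH s N"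
proof (induction N)
  case 0 then show ?case by (simp add: altH_def)
next
  case (Suc N)
  have e1: "altH 1 (Suc N) = altH 1 N + (-1)^N/real(Suc N)" by (rule altH1_Suc)
  have e2: "altH s (Suc N) = altH s N + (-1)^N/real(Suc N)^s" by (rule altH_Suc)
  show ?case
    unfolding sum.lessThan_Suc Suc e1 e2
    by (simp add: algebra_simps)
qed

lemma stepA:
  assumes s: "s \<ge> 2"
  shows "summable (\<lambda>k. (-1)^k / real (Suc k)^s * altH 1 (Suc k))"
    and "(\<lambda>m. (-1) ^ (Suc m) * altH s m / real (Suc m)) sums
          ((\<Sum>k. (-1)^k / real (Suc k)^s * altH 1 (Suc k)) - ln 2 * altzetaN s)"
proof -
  have "convergent (\<lambda>n. altH 1 n)" using altH1_lim convergentI by blast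
  then obtain B where B: "\<And>n. norm (altH 1 n) \<le> B"
    using convergent_imp_Bseq Bseq_def by blast
  have "summable (\<lambda>k. B * (1 / real (Suc k)^s))"
    using summable_zeta[OF s] by (rule summable_mult)
  then show sm: "summable (\<lambda>k. (-1)^k / real (Suc k)^s * altH 1 (Suc k))"
  proof (rule summable_comparison_test')
    fix k :: nat
    have "norm ((-1)^k / real (Suc k)^s * altH 1 (Suc k)) = norm (altH 1 (Suc k)) * (1 / real (Suc k)^s)"
      by (simp add: abs_mult power_abs)
    also have "\<dots> \<le> B * (1 / real (Suc k)^s)"
      by (rule mult_right_mono[OF B]) simp
    finally show "norm ((-1)^k / real (Suc k)^s * altH 1 (Suc k)) \<le> B * (1 / real (Suc k)^s)" .
  qed
  have "(\<lambda>N. (\<Sum>k<N. (-1)^k / real (Suc k)^s * altH 1 (Suc k)) - altH 1 N * altH s N)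
        \<longlonglongrightarrow> (\<Sum>k. (-1)^k / real (Suc k)^s * altH 1 (Suc k)) - ln 2 * altzetaN s"
    by (intro tendsto_intros altH1_lim altH_lim s summable_LIMSEQ sm)
  then show "(\<lambda>m. (-1) ^ (Suc m) * altH s m / real (Suc m)) sums
          ((\<Sum>k. (-1)^k / real (Suc k)^s * altH 1 (Suc k)) - ln 2 * altzetaN s)"
    unfolding sums_def stepA_partial .
qed

lemma neg1_sq: "(-1::real)^i * (-1)^i = 1"
  by (simp add: power_mult_distrib[symmetric])

lemma neg1_diff: "t \<le> i \<Longrightarrow> (-1::real)^(i - t) = (-1)^i * (-1)^t"
proof -
  assume "t \<le> i"
  then have "(-1::real)^i = (-1)^(i-t) * (-1)^t" by (simp add: power_add[symmetric])
  then have "(-1::real)^i * (-1)^t = (-1)^(i-t) * ((-1)^t * (-1)^t)" by simp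
  then show ?thesis using neg1_sq[of t] by simp
qed

lemma alt_harm_sums: "(\<lambda>j. (-1)^j / real (Suc j)) sums ln 2"
  by (rule alternating_harmonic_series_sums)

lemma fiberI:
  fixes i b :: nat
  defines "K \<equiv> real (Suc i)"
  shows "(\<lambda>j. if i = j then 0 else (-1)^(Suc j) / (K^(2*b) * real (Suc j) * (real (Suc j)^2 - K^2))) sums
   (1/K^(2*b+2) * (ln 2 + (-1)^i * (ln 2 - altH 1 i)/2 + (-1)^i * (ln 2 - altH 1 (Suc i))/2 - 3/4 * (-1)^i / K))"
proof -
  define A where "A j = (-1::real)^j / real (Suc j)" for j
  define B where "B j = (if j = i then 0 else (-1::real)^(Suc j) / (2*(real j - real i)))" for j
  define C where "C j = (-1::real)^(Suc j) / (2*(real j + real i + 2))" for j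
  have A: "A sums ln 2" unfolding A_def by (rule alt_harm_sums)
  have C: "C sums ((-1)^i * (ln 2 - altH 1 (Suc i))/2)"
  proof -
    have "(\<lambda>j. A (j + Suc i)) sums (ln 2 - (\<Sum>n<Suc i. A n))"
      using A by (subst sums_iff_shift) simp
    also have "(\<Sum>n<Suc i. A n) = altH 1 (Suc i)" unfolding A_def altH_alt by simp
    finally have "(\<lambda>j. (-1)^i * A (j + Suc i) / 2) sums ((-1)^i * (ln 2 - altH 1 (Suc i))/2)"
      by (intro sums_divide sums_mult)
    moreover have "(\<lambda>j. (-1)^i * A (j + Suc i) / 2) = C"
    proof
      fix j
      have "(-1::real)^i * (-1)^(j + Suc i) = (-1)^(Suc j) * ((-1)^i * (-1)^i)"
        by (simp add: power_add)
      also have "\<dots> = (-1)^(Suc j)" by (simp add: neg1_sq)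
      finally have e: "(-1::real)^i * (-1)^(j + Suc i) = (-1)^(Suc j)" .
      show "(-1)^i * A (j + Suc i) / 2 = C j"
        unfolding A_def C_def using e
        by (simp add: field_simps)
    qed
    ultimately show ?thesis by simp
  qed
  have B: "B sums ((-1)^i * (ln 2 - altH 1 i)/2)"
  proof -
    have "(\<lambda>t. (-1)^i * A t / 2) sums ((-1)^i * ln 2 / 2)"
      by (intro sums_divide sums_mult A)
    moreover have "(\<lambda>t. (-1)^i * A t / 2) = (\<lambda>t. B (t + Suc i))"
    proof
      fix t
      have "(-1::real)^(Suc (t + Suc i)) = (-1)^i * (-1)^t"
        by (simp add: power_add)
      then show "(-1)^i * A t / 2 = B (t + Suc i)"
        unfolding A_def B_def by (simp add: field_simps)
    qed
    ultimately have "(\<lambda>t. B (t + Suc i)) sums ((-1)^i * ln 2 / 2)" by simp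
    then have s1: "B sums ((-1)^i * ln 2 / 2 + (\<Sum>j<Suc i. B j))"
      by (subst sums_iff_shift[symmetric])
    have "(\<Sum>j<Suc i. B j) = (\<Sum>j<i. B j)" by (simp add: B_def)
    also have "\<dots> = (\<Sum>t<i. B (i - Suc t))"
      using sum.atLeastLessThan_rev[of B 0 i] by (simp add: atLeast0LessThan)
    also have "\<dots> = (\<Sum>t<i. - ((-1)^i * A t / 2))"
    proof (rule sum.cong)
      fix t assume "t \<in> {..<i}"
      then have t: "t < i" by simp
      have e: "(-1::real)^(Suc (i - Suc t)) = (-1)^i * (-1)^t"
        using t neg1_diff[of t i] by (simp add: Suc_diff_Suc)
      have r: "real (i - Suc t) - real i = - real (Suc t)" using t by (simp add: of_nat_diff)
      show "B (i - Suc t) = - ((-1)^i * A t / 2)"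
        unfolding B_def A_def using t e r by (simp add: field_simps)
    qed simp
    also have "\<dots> = - ((-1)^i / 2) * (\<Sum>t<i. A t)"
      by (simp add: sum_distrib_left)
    also have "(\<Sum>t<i. A t) = altH 1 i" unfolding altH_alt A_def by simp
    finally have "(\<Sum>j<Suc i. B j) = - ((-1)^i / 2) * altH 1 i" .
    with s1 have "B sums ((-1)^i * ln 2 / 2 + - ((-1)^i / 2) * altH 1 i)" by simp
    moreover have "(-1)^i * ln 2 / 2 + - ((-1)^i / 2) * altH 1 i = (-1)^i * (ln 2 - altH 1 i)/2"
      by (simp add: algebra_simps)
    ultimately show ?thesis by metis
  qed
  have D: "(\<lambda>j. if j = i then A i + C i else 0) sums (A i + C i)"
    using sums_single[of i "\<lambda>_. A i + C i"] by simp
  have AC: "A i + C i = 3/4 * (-1)^i / K"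
  proof -
    have k2: "real i + real i + 2 = 2 * K" unfolding K_def by simp
    have "K > 0" unfolding K_def by simp
    have a1: "A i = (-1)^i / K" unfolding A_def K_def by simp
    have c1: "C i = - ((-1)^i) / (2 * (2 * K))" unfolding C_def k2 by simp
    show ?thesis unfolding a1 c1 using \<open>K > 0\<close> by (simp add: field_simps)
  qed
  have tot: "(\<lambda>j. 1/K^(2*b+2) * (A j + B j + C j - (if j = i then A i + C i else 0))) sums
      (1/K^(2*b+2) * (ln 2 + (-1)^i * (ln 2 - altH 1 i)/2 + (-1)^i * (ln 2 - altH 1 (Suc i))/2 - (A i + C i)))"
    by (intro sums_mult sums_diff sums_add A B C D)
  have Kpos: "K > 0" unfolding K_def by simp
  have eq: "(\<lambda>j. 1/K^(2*b+2) * (A j + B j + C j - (if j = i then A i + C i else 0))) =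
        (\<lambda>j. if i = j then 0 else (-1)^(Suc j) / (K^(2*b) * real (Suc j) * (real (Suc j)^2 - K^2)))"
  proof
    fix j
    show "1/K^(2*b+2) * (A j + B j + C j - (if j = i then A i + C i else 0)) =
        (if i = j then 0 else (-1)^(Suc j) / (K^(2*b) * real (Suc j) * (real (Suc j)^2 - K^2)))"
    proof (cases "i = j")
      case True then show ?thesis by (simp add: B_def)
    next
      case False
      define M where "M = real (Suc j)"
      have M: "M > 0" unfolding M_def by simp
      have d1: "real j - real i = M - K" unfolding M_def K_def by simp
      have d2: "real j + real i + 2 = M + K" unfolding M_def K_def by simp
      have ne: "M - K \<noteq> 0" using False unfolding M_def K_def by simp
      have ne2: "M + K \<noteq> 0" using M Kpos by simp
      have ne3: "M^2 - K^2 \<noteq> 0" using ne ne2 by (simp add: power2_eq_square square_diff_square_factored)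
      define x where "x = (-1::real)^j"
      have Aj: "A j = x / M" unfolding A_def x_def M_def by simp
      have Bj: "B j = - x / (2 * (M - K))" unfolding B_def x_def using False d1 by simp
      have Cj: "C j = - x / (2 * (M + K))" unfolding C_def x_def using d2 by simp
      have "1/K^(2*b+2) * (x / M + - x / (2 * (M - K)) + - x / (2 * (M + K))) =
            - x / (K^(2*b) * M * (M^2 - K^2))"
        using ne ne2 ne3 M Kpos by (simp add: field_simps power2_eq_square power_add)
      then show ?thesis using False Aj Bj Cj unfolding x_def M_def by simp
    qed
  qed
  show ?thesis using tot unfolding eq by (simp only: AC)
qed

lemma telescope_shift:
  fixes f :: "nat \<Rightarrow> real"
  assumes f: "f \<longlonglongrightarrow> 0"
  shows "(\<lambda>n. f n - f (n + p)) sums (\<Sum>n<p. f n)"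
proof (induction p)
  case 0 then show ?case by simp
next
  case (Suc p)
  have g: "(\<lambda>n. f (n + p)) \<longlonglongrightarrow> 0"
    using f by (rule LIMSEQ_ignore_initial_segment)
  have "(\<lambda>n. f (Suc n + p) - f (n + p)) sums (0 - f (0 + p))"
    by (rule telescope_sums) (use g LIMSEQ_Suc[OF g] in simp_all)
  then have t: "(\<lambda>n. f (n + p) - f (n + Suc p)) sums f p"
    using sums_minus by fastforce
  have "(\<lambda>n. (f n - f (n + p)) + (f (n + p) - f (n + Suc p))) sums ((\<Sum>n<p. f n) + f p)"
    by (rule sums_add[OF Suc t])
  then show ?case by simp
qed

lemma pf_tail: fixes t M :: real assumes "t \<ge> 0" "M > 0"
  shows "1 / (M^2 - (t + M + 1)^2) = - (1 / (2*M)) * (1 / (t + 1) - 1 / (t + 1 + 2 * M))"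
proof -
  have a: "M^2 - (t + M + 1)^2 = - ((t+1) * (t + 1 + 2*M))" by (simp add: power2_eq_square algebra_simps)
  have b: "(t+1) > 0" "t + 1 + 2*M > 0" using assms by auto
  have c: "- (1 / (2*M)) * (1 / (t + 1) - 1 / (t + 1 + 2 * M)) = - (1 / ((t+1) * (t + 1 + 2*M)))"
    using b assms by (simp add: field_simps)
  show ?thesis unfolding a c by simp
qed
lemma pf_fin: fixes K M :: real assumes "K > 0" "M > K"
  shows "1 / (M^2 - K^2) = (1 / (2*M)) * (1 / (M - K) + 1 / (M + K))"
proof -
  have a: "M^2 - K^2 = (M - K) * (M + K)" by (simp add: power2_eq_square algebra_simps)
  show ?thesis unfolding a using assms by (simp add: field_simps)
qed
lemma pf_step: fixes K M X :: real assumes "K > 0" "M > 0" "X > 0" "M^2 - K^2 \<noteq> 0"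
  shows "(1/K^2) * (1 / (X * (M^2 - K^2))) = 1 / (X * M^2 * K^2) + 1 / (X * M^2 * (M^2 - K^2))"
  using assms by (simp add: field_simps power2_eq_square)
lemma harm_shift_sum: "(\<Sum>i<n. 1 / real (i + p + 1)) = harm (p + n) - (harm p :: real)"
proof (induction n)
  case 0 then show ?case by simp
next
  case (Suc n)
  have "harm (p + Suc n) = harm (p + n) + 1 / real (n + p + 1)"
    using harm_Suc[of "p+n"] by (simp add: divide_inverse add_ac)
  then show ?case using Suc by simp
qed

lemma harm_rev: "(\<Sum>i<j. 1 / (real j - real i)) = (harm j :: real)"
proof -
  have "(\<Sum>i<j. 1 / (real j - real i)) = (\<Sum>t<j. 1 / (real j - real (j - Suc t)))"
    using sum.atLeastLessThan_rev[of "\<lambda>i. 1 / (real j - real i)" 0 j] by (simp add: atLeast0LessThan)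
  also have "\<dots> = (\<Sum>t<j. inverse (real (Suc t)))"
    by (rule sum.cong) (auto simp: of_nat_diff divide_inverse)
  finally show ?thesis by (simp add: harm_altdef)
qed

lemma Qsums:
  fixes j :: nat
  defines "M \<equiv> real (Suc j)"
  shows "(\<lambda>i. if i = j then 0 else 1 / (M^2 - real (Suc i)^2)) sums (- 3 / (4 * M^2))"
proof -
  define Q where "Q i = (if i = j then 0 else 1 / (M^2 - real (Suc i)^2))" for i
  have Mpos: "M > 0" unfolding M_def by simp
  define f where "f t = 1 / real (Suc t)" for t
  have f0: "f \<longlonglongrightarrow> 0" unfolding f_def using LIMSEQ_inverse_real_of_nat by (simp add: divide_inverse)
  have tail: "(\<lambda>t. Q (t + Suc j)) = (\<lambda>t. - (1 / (2*M)) * (f t - f (t + 2 * Suc j)))"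
  proof
    fix t
    have k1: "real (Suc (t + Suc j)) = real t + M + 1" unfolding M_def by simp
    have k2: "real (Suc (t + 2 * Suc j)) = real t + 1 + 2 * M" unfolding M_def by simp
    have p1: "real t + 1 > 0" by simp
    have ne: "M^2 - (real t + M + 1)^2 \<noteq> 0"
    proof -
      have "(real t + M + 1)^2 > M^2" using Mpos by (intro power_strict_mono) auto
      then show ?thesis by simp
    qed
    have "Q (t + Suc j) = 1 / (M^2 - (real t + M + 1)^2)" unfolding Q_def k1 by simp
    also have "\<dots> = - (1 / (2*M)) * (1 / (real t + 1) - 1 / (real t + 1 + 2 * M))"
      by (rule pf_tail) (use Mpos in auto)
    also have "\<dots> = - (1 / (2*M)) * (f t - f (t + 2 * Suc j))"
      unfolding f_def k2 by simp
    finally show "Q (t + Suc j) = - (1 / (2*M)) * (f t - f (t + 2 * Suc j))" .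
  qed
  have "(\<lambda>t. - (1 / (2*M)) * (f t - f (t + 2 * Suc j))) sums (- (1 / (2*M)) * (\<Sum>n<2 * Suc j. f n))"
    by (intro sums_mult telescope_shift f0)
  also have "(\<Sum>n<2 * Suc j. f n) = harm (2 * Suc j)" unfolding f_def harm_altdef by (simp add: divide_inverse)
  finally have "(\<lambda>t. Q (t + Suc j)) sums (- (1 / (2*M)) * harm (2 * Suc j))" unfolding tail .
  then have s1: "Q sums (- (1 / (2*M)) * harm (2 * Suc j) + (\<Sum>i<Suc j. Q i))"
    by (subst sums_iff_shift[symmetric])
  have "(\<Sum>i<Suc j. Q i) = (\<Sum>i<j. Q i)" by (simp add: Q_def)
  also have "\<dots> = (\<Sum>i<j. (1 / (2*M)) * (1 / (real j - real i) + 1 / (real i + real (Suc j) + 1)))"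
  proof (rule sum.cong)
    fix i assume "i \<in> {..<j}"
    then have i: "i < j" by simp
    have a: "real j - real i > 0" using i by simp
    have b: "real i + real (Suc j) + 1 > 0" by simp
    have m1: "real j - real i = M - real (Suc i)" unfolding M_def by simp
    have m2: "real i + real (Suc j) + 1 = M + real (Suc i)" unfolding M_def by simp
    have ne: "M^2 - real (Suc i)^2 \<noteq> 0"
    proof -
      have "real (Suc i) < M" unfolding M_def using i by simp
      then have "real (Suc i)^2 < M^2" by (intro power_strict_mono) auto
      then show ?thesis by simp
    qed
    have KM: "real (Suc i) < M" unfolding M_def using i by simp
    show "Q i = (1 / (2*M)) * (1 / (real j - real i) + 1 / (real i + real (Suc j) + 1))"
      unfolding m1 m2 using i pf_fin[OF _ KM] by (simp add: Q_def)
  qed simp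
  also have "\<dots> = (1 / (2*M)) * ((\<Sum>i<j. 1 / (real j - real i)) + (\<Sum>i<j. 1 / real (i + Suc j + 1)))"
    by (simp only: sum_distrib_left[symmetric] sum.distrib) (simp add: add_ac)
  also have "\<dots> = (1 / (2*M)) * (harm j + (harm (Suc j + j) - harm (Suc j)))"
    unfolding harm_rev harm_shift_sum ..
  finally have fin: "(\<Sum>i<Suc j. Q i) = (1 / (2*M)) * (harm j + (harm (Suc j + j) - harm (Suc j)))" .
  have h1: "harm (2 * Suc j) = harm (Suc j + j) + 1 / (2 * M)"
  proof -
    have e: "2 * Suc j = Suc (Suc j + j)" by simp
    show ?thesis unfolding e harm_Suc by (simp add: M_def divide_inverse)
  qed
  have h2: "harm (Suc j) = harm j + 1 / M" by (simp add: harm_Suc M_def divide_inverse)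
  have "- (1 / (2*M)) * harm (2 * Suc j) + (\<Sum>i<Suc j. Q i) = - 3 / (4 * M^2)"
    unfolding fin h1 h2 using Mpos by (simp add: field_simps power2_eq_square)
  with s1 have "Q sums (- 3 / (4 * M^2))" by simp
  then show ?thesis unfolding Q_def .
qed

lemma PF:
  fixes K M :: real
  assumes K: "K > 0" and M: "M > 0" and ne: "M^2 - K^2 \<noteq> 0"
  shows "1 / (K^(2*b) * (M^2 - K^2)) =
     (\<Sum>c<b. 1 / (M^(2*(b-c)) * K^(2*c+2))) + 1 / (M^(2*b) * (M^2 - K^2))"
proof (induction b)
  case 0 then show ?case by simp
next
  case (Suc b)
  have "1 / (K^(2*Suc b) * (M^2 - K^2)) = (1/K^2) * (1 / (K^(2*b) * (M^2 - K^2)))"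
    by (simp add: power_add power2_eq_square)
  also have "\<dots> = (1/K^2) * (\<Sum>c<b. 1 / (M^(2*(b-c)) * K^(2*c+2))) + (1/K^2) * (1 / (M^(2*b) * (M^2 - K^2)))"
    unfolding Suc by (simp add: algebra_simps)
  also have "(1/K^2) * (\<Sum>c<b. 1 / (M^(2*(b-c)) * K^(2*c+2))) = (\<Sum>c<b. 1 / (M^(2*(Suc b - Suc c)) * K^(2*(Suc c)+2)))"
    by (simp add: sum_distrib_left power_add power2_eq_square field_simps)
  also have "(1/K^2) * (1 / (M^(2*b) * (M^2 - K^2))) = 1 / (M^(2*(Suc b - 0)) * K^(2*0+2)) + 1 / (M^(2*Suc b) * (M^2 - K^2))"
    using pf_step[OF K M _ ne, of "M^(2*b)"] M by (simp add: power_add mult_ac power2_eq_square)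
  finally have X: "1 / (K^(2*Suc b) * (M^2 - K^2)) = (\<Sum>c<b. 1 / (M^(2*(Suc b - Suc c)) * K^(2*(Suc c)+2))) +
     (1 / (M^(2*(Suc b - 0)) * K^(2*0+2)) + 1 / (M^(2*Suc b) * (M^2 - K^2)))" .
  show ?case using X unfolding sum.lessThan_Suc_shift by (simp only: add_ac)
qed

lemma fiberII:
  fixes j b :: nat
  defines "M \<equiv> real (Suc j)"
  shows "(\<lambda>i. if i = j then 0 else (-1)^(Suc j) / (real (Suc i)^(2*b) * M * (M^2 - real (Suc i)^2))) sums
     ((-1)^(Suc j) / M * ((\<Sum>c<b. zetaN (2*c+2) / M^(2*(b-c))) - (real b + 3/4) / M^(2*b+2)))"
proof -
  have Mpos: "M > 0" unfolding M_def by simp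
  define x where "x = (-1::real)^(Suc j) / M"
  define Q where "Q i = (if i = j then 0 else 1 / (M^2 - real (Suc i)^2))" for i
  have Q: "Q sums (- 3 / (4 * M^2))" unfolding Q_def M_def by (rule Qsums)
  have Z: "(\<lambda>i. \<Sum>c<b. (1 / M^(2*(b-c))) * (1 / real (Suc i)^(2*c+2))) sums (\<Sum>c<b. (1 / M^(2*(b-c))) * zetaN (2*c+2))"
    by (intro sums_sum sums_mult zeta_sums) simp
  have S: "(\<lambda>i. if i = j then (\<Sum>c<b. 1 / (M^(2*(b-c)) * M^(2*c+2))) else 0) sums (\<Sum>c<b. 1 / (M^(2*(b-c)) * M^(2*c+2)))"
    using sums_single[of j "\<lambda>_. (\<Sum>c<b. 1 / (M^(2*(b-c)) * M^(2*c+2)))"] by simp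
  have tot: "(\<lambda>i. x * ((\<Sum>c<b. (1 / M^(2*(b-c))) * (1 / real (Suc i)^(2*c+2)))
        - (if i = j then (\<Sum>c<b. 1 / (M^(2*(b-c)) * M^(2*c+2))) else 0) + (1 / M^(2*b)) * Q i)) sums
        (x * ((\<Sum>c<b. (1 / M^(2*(b-c))) * zetaN (2*c+2)) - (\<Sum>c<b. 1 / (M^(2*(b-c)) * M^(2*c+2)))
          + (1 / M^(2*b)) * (- 3 / (4 * M^2))))"
    by (intro sums_mult sums_add sums_diff Z S Q)
  have eq: "(\<lambda>i. x * ((\<Sum>c<b. (1 / M^(2*(b-c))) * (1 / real (Suc i)^(2*c+2)))
        - (if i = j then (\<Sum>c<b. 1 / (M^(2*(b-c)) * M^(2*c+2))) else 0) + (1 / M^(2*b)) * Q i)) =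
      (\<lambda>i. if i = j then 0 else (-1)^(Suc j) / (real (Suc i)^(2*b) * M * (M^2 - real (Suc i)^2)))"
  proof
    fix i
    show "x * ((\<Sum>c<b. (1 / M^(2*(b-c))) * (1 / real (Suc i)^(2*c+2)))
        - (if i = j then (\<Sum>c<b. 1 / (M^(2*(b-c)) * M^(2*c+2))) else 0) + (1 / M^(2*b)) * Q i) =
      (if i = j then 0 else (-1)^(Suc j) / (real (Suc i)^(2*b) * M * (M^2 - real (Suc i)^2)))"
    proof (cases "i = j")
      case True then show ?thesis by (simp add: Q_def M_def)
    next
      case False
      define K where "K = real (Suc i)"
      have Kpos: "K > 0" unfolding K_def by simp
      have ne: "M^2 - K^2 \<noteq> 0"
      proof
        assume "M^2 - K^2 = 0"
        then have "M^2 = K^2" by simp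
        then have "M = K" using Mpos Kpos by (simp add: power2_eq_iff)
        then show False using False unfolding M_def K_def by simp
      qed
      have "(-1)^(Suc j) / (K^(2*b) * M * (M^2 - K^2)) = x * (1 / (K^(2*b) * (M^2 - K^2)))"
        unfolding x_def by simp
      also have "\<dots> = x * ((\<Sum>c<b. 1 / (M^(2*(b-c)) * K^(2*c+2))) + 1 / (M^(2*b) * (M^2 - K^2)))"
        using PF[OF Kpos Mpos ne] by simp
      finally show ?thesis using False unfolding Q_def K_def[symmetric] by simp
    qed
  qed
  have v: "(\<Sum>c<b. 1 / (M^(2*(b-c)) * M^(2*c+2))) = real b / M^(2*b+2)"
  proof -
    have "(\<Sum>c<b. 1 / (M^(2*(b-c)) * M^(2*c+2))) = (\<Sum>c<b. 1 / M^(2*b+2))"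
    proof (rule sum.cong)
      fix c assume "c \<in> {..<b}"
      then have "2*(b-c) + (2*c+2) = 2*b+2" by simp
      then show "1 / (M^(2*(b-c)) * M^(2*c+2)) = 1 / M^(2*b+2)" by (metis power_add)
    qed simp
    then show ?thesis by simp
  qed
  have val: "x * ((\<Sum>c<b. (1 / M^(2*(b-c))) * zetaN (2*c+2)) - (\<Sum>c<b. 1 / (M^(2*(b-c)) * M^(2*c+2)))
          + (1 / M^(2*b)) * (- 3 / (4 * M^2))) =
     (-1)^(Suc j) / M * ((\<Sum>c<b. zetaN (2*c+2) / M^(2*(b-c))) - (real b + 3/4) / M^(2*b+2))"
    unfolding v x_def using Mpos by (simp add: field_simps power_add power2_eq_square)
  show ?thesis using tot unfolding eq val .
qed

definition phi :: "nat \<Rightarrow> nat \<Rightarrow> nat \<Rightarrow> real" where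
  "phi b i j = (if i = j then 0 else (-1)^(Suc j) / (real (Suc i)^(2*b) * real (Suc j) * (real (Suc j)^2 - real (Suc i)^2)))"

definition u :: "nat \<Rightarrow> real" where "u n = 1 / (real (Suc n) * sqrt (real (Suc n)))"

lemma u_nonneg: "u n \<ge> 0" unfolding u_def by simp

lemma summable_u: "summable u"
proof -
  have "summable (\<lambda>n. real n powr (-3/2))" by (subst summable_real_powr_iff) simp
  then have "summable (\<lambda>n. real (Suc n) powr (-3/2))" by (subst summable_Suc_iff)
  moreover have "y powr (-3/2) = 1 / (y * sqrt y)" if y: "y > 0" for y :: real
  proof -
    have "y powr (3/2) = y powr (1 + 1/2)" by simp
    also have "\<dots> = y powr 1 * y powr (1/2)" by (rule powr_add)
    also have "\<dots> = y * sqrt y" using y by (simp add: powr_half_sqrt)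
    finally have "y powr (3/2) = y * sqrt y" .
    moreover have "y powr (-3/2) = 1 / y powr (3/2)" by (simp add: powr_minus_divide[symmetric])
    ultimately show ?thesis by simp
  qed
  then have "real (Suc n) powr (-3/2) = u n" for n
  proof -
    have "real (Suc n) > 0" by (simp del: of_nat_Suc)
    from \<open>\<And>y. y > 0 \<Longrightarrow> y powr (-3/2) = 1 / (y * sqrt y)\<close>[OF this] show ?thesis
      unfolding u_def .
  qed
  ultimately show ?thesis by simp
qed

lemma u_prod_summable: "(\<lambda>(x,y). u x * u y) summable_on (UNIV \<times> UNIV)"
proof -
  have U: "(u has_sum suminf u) UNIV"
    by (rule sums_nonneg_imp_has_sum[OF summable_sums[OF summable_u] u_nonneg])
  show ?thesis
  proof (rule summable_on_SigmaI)
    fix x :: nat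
    show "((\<lambda>y. (\<lambda>(x,y). u x * u y) (x, y)) has_sum (u x * suminf u)) UNIV"
      using has_sum_cmult_right[OF U, of "u x"] by simp
  next
    show "(\<lambda>x. u x * suminf u) summable_on UNIV"
      using has_sum_cmult_left[OF U, of "suminf u"] unfolding summable_on_def by blast
  next
    fix x y show "0 \<le> (\<lambda>(x,y). u x * u y) (x,y)" using u_nonneg by simp
  qed
qed

lemma sqrt_amgm: fixes K D :: real assumes "K \<ge> 0" "D \<ge> 0" shows "sqrt K * sqrt D \<le> K + D"
proof -
  have "0 \<le> (sqrt K - sqrt D)^2" by simp
  also have "\<dots> = K + D - 2 * (sqrt K * sqrt D)" using assms by (simp add: power2_eq_square algebra_simps)
  finally have "2 * (sqrt K * sqrt D) \<le> K + D" by simp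
  moreover have "sqrt K * sqrt D \<ge> 0" using assms by simp
  ultimately show ?thesis by linarith
qed

lemma bound1:
  fixes K D X :: real assumes K: "K \<ge> 1" and D: "D \<ge> 1" and X: "X \<ge> 1"
  shows "1 / (X * (K + D) * ((K + D)^2 - K^2)) \<le> (1 / (K * sqrt K)) * (1 / (D * sqrt D))"
proof -
  have e: "(K + D)^2 - K^2 = D * (2*K + D)" by (simp add: power2_eq_square algebra_simps)
  have s: "sqrt K * sqrt D \<le> K + D" using K D by (intro sqrt_amgm) auto
  have pos: "0 < K * sqrt K * (D * sqrt D)" using K D by simp
  have "K * sqrt K * (D * sqrt D) = (sqrt K * sqrt D) * D * K" by (simp add: algebra_simps)
  also have "\<dots> \<le> (K + D) * D * (2*K + D)"
    using s K D by (intro mult_mono) auto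
  also have "\<dots> \<le> X * ((K + D) * D * (2*K + D))"
    using X K D mult_right_mono[of 1 X "(K + D) * D * (2*K + D)"] by simp
  also have "\<dots> = X * (K + D) * (D * (2*K + D))" by (simp add: algebra_simps)
  finally have le: "K * sqrt K * (D * sqrt D) \<le> X * (K + D) * ((K + D)^2 - K^2)" unfolding e .
  have "1 / (X * (K + D) * ((K + D)^2 - K^2)) \<le> 1 / (K * sqrt K * (D * sqrt D))"
    by (rule divide_left_mono[OF le]) (use pos le in auto)
  then show ?thesis by simp
qed

lemma bound2:
  fixes M D X :: real assumes M: "M \<ge> 1" and D: "D \<ge> 1" and X: "X \<ge> 1"
  shows "1 / (X * M * ((M + D)^2 - M^2)) \<le> (1 / (M * sqrt M)) * (1 / (D * sqrt D))"
proof -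
  have e: "(M + D)^2 - M^2 = D * (2*M + D)" by (simp add: power2_eq_square algebra_simps)
  have s: "sqrt M * sqrt D \<le> M + D" using M D by (intro sqrt_amgm) auto
  have pos: "0 < M * sqrt M * (D * sqrt D)" using M D by simp
  have "M * sqrt M * (D * sqrt D) = (sqrt M * sqrt D) * D * M" by (simp add: algebra_simps)
  also have "\<dots> \<le> (2*M + D) * D * M"
    using s M D by (intro mult_mono) auto
  also have "\<dots> \<le> X * ((2*M + D) * D * M)"
    using X M D mult_right_mono[of 1 X "(2*M + D) * D * M"] by simp
  also have "\<dots> = X * M * (D * (2*M + D))" by (simp add: algebra_simps)
  finally have le: "M * sqrt M * (D * sqrt D) \<le> X * M * ((M + D)^2 - M^2)" unfolding e .
  have "1 / (X * M * ((M + D)^2 - M^2)) \<le> 1 / (M * sqrt M * (D * sqrt D))"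
    by (rule divide_left_mono[OF le]) (use pos le in auto)
  then show ?thesis by simp
qed

lemma phi_summable: "(\<lambda>(i,j). phi b i j) summable_on (UNIV \<times> UNIV)"
proof -
  define R1 where "R1 = {(i,j). i < (j::nat)}"
  define R2 where "R2 = {(i,j). j < (i::nat)}"
  define g1 where "g1 = (\<lambda>(x,d). (x, x + d + 1::nat))"
  define g2 where "g2 = (\<lambda>(x,d). (x + d + 1, x::nat))"
  have b1: "bij_betw g1 (UNIV \<times> UNIV) R1"
    by (rule bij_betw_byWitness[where f' = "\<lambda>(i,j). (i, j - i - 1)"])
       (auto simp: g1_def R1_def)
  have b2: "bij_betw g2 (UNIV \<times> UNIV) R2"
    by (rule bij_betw_byWitness[where f' = "\<lambda>(i,j). (j, i - j - 1)"])
       (auto simp: g2_def R2_def)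
  have s1: "(\<lambda>p. (\<lambda>(i,j). phi b i j) (g1 p)) summable_on (UNIV \<times> UNIV)"
  proof -
    have "(\<lambda>p. norm ((\<lambda>(i,j). phi b i j) (g1 p))) summable_on (UNIV \<times> UNIV)"
    proof (rule Infinite_Sum.abs_summable_on_comparison_test')
      show "(\<lambda>(x,y). u x * u y) summable_on (UNIV \<times> UNIV)"
        by (rule u_prod_summable)
    next
      fix p :: "nat \<times> nat" assume "p \<in> UNIV \<times> UNIV"
      obtain x d where p: "p = (x,d)" by (cases p)
      define K where "K = real (Suc x)"
      define D where "D = real (Suc d)"
      have M: "real (Suc (x + d + 1)) = K + D" unfolding K_def D_def by simp
      have Kx: "1 + real x = K" unfolding K_def by simp
      have K1: "K \<ge> 1" and D1: "D \<ge> 1" unfolding K_def D_def by auto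
      have X1: "K^(2*b) \<ge> 1" using K1 by (simp add: one_le_power)
      have pos: "(K + D)^2 - K^2 > 0"
      proof -
        have "(K + D)^2 - K^2 = D * (2*K + D)" by (simp add: power2_eq_square algebra_simps)
        then show ?thesis using K1 D1 by simp
      qed
      have "norm ((\<lambda>(i,j). phi b i j) (g1 p)) = 1 / (K^(2*b) * (K + D) * ((K + D)^2 - K^2))"
        unfolding p g1_def phi_def using M pos K1 D1 by (simp add: Kx abs_mult power_abs)
      also have "\<dots> \<le> (1 / (K * sqrt K)) * (1 / (D * sqrt D))" by (rule bound1[OF K1 D1 X1])
      also have "\<dots> = norm ((\<lambda>(x,y). u x * u y) p)" unfolding p u_def K_def D_def by simp
      finally show "norm ((\<lambda>(i,j). phi b i j) (g1 p)) \<le> (\<lambda>(x,y). u x * u y) p" using u_nonneg by (simp add: p)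
    qed
    then show ?thesis by (rule abs_summable_summable)
  qed
  have s2: "(\<lambda>p. (\<lambda>(i,j). phi b i j) (g2 p)) summable_on (UNIV \<times> UNIV)"
  proof -
    have "(\<lambda>p. norm ((\<lambda>(i,j). phi b i j) (g2 p))) summable_on (UNIV \<times> UNIV)"
    proof (rule Infinite_Sum.abs_summable_on_comparison_test')
      show "(\<lambda>(x,y). u x * u y) summable_on (UNIV \<times> UNIV)"
        by (rule u_prod_summable)
    next
      fix p :: "nat \<times> nat" assume "p \<in> UNIV \<times> UNIV"
      obtain x d where p: "p = (x,d)" by (cases p)
      define M where "M = real (Suc x)"
      define D where "D = real (Suc d)"
      have K: "real (Suc (x + d + 1)) = M + D" unfolding M_def D_def by simp
      have Mx: "1 + real x = M" unfolding M_def by simp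
      have M1: "M \<ge> 1" and D1: "D \<ge> 1" unfolding M_def D_def by auto
      have X1: "(M + D)^(2*b) \<ge> 1" using M1 D1 by (simp add: one_le_power)
      have pos: "(M + D)^2 - M^2 > 0"
      proof -
        have "(M + D)^2 - M^2 = D * (2*M + D)" by (simp add: power2_eq_square algebra_simps)
        then show ?thesis using M1 D1 by simp
      qed
      have "norm ((\<lambda>(i,j). phi b i j) (g2 p)) = 1 / ((M + D)^(2*b) * M * ((M + D)^2 - M^2))"
        unfolding p g2_def phi_def using K pos M1 D1 by (simp add: Mx abs_mult power_abs abs_minus_commute)
      also have "\<dots> \<le> (1 / (M * sqrt M)) * (1 / (D * sqrt D))" by (rule bound2[OF M1 D1 X1])
      also have "\<dots> = norm ((\<lambda>(x,y). u x * u y) p)" unfolding p u_def M_def D_def by simp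
      finally show "norm ((\<lambda>(i,j). phi b i j) (g2 p)) \<le> (\<lambda>(x,y). u x * u y) p" using u_nonneg by (simp add: p)
    qed
    then show ?thesis by (rule abs_summable_summable)
  qed
  have r1: "(\<lambda>(i,j). phi b i j) summable_on R1"
    using s1 summable_on_reindex_bij_betw[OF b1] by blast
  have r2: "(\<lambda>(i,j). phi b i j) summable_on R2"
    using s2 summable_on_reindex_bij_betw[OF b2] by blast
  have "(\<lambda>(i,j). phi b i j) summable_on (R1 \<union> R2)"
    by (rule summable_on_Un_disjoint[OF r1 r2]) (auto simp: R1_def R2_def)
  moreover have "(\<lambda>(i,j). phi b i j) summable_on (R1 \<union> R2) \<longleftrightarrow> (\<lambda>(i,j). phi b i j) summable_on (UNIV \<times> UNIV)"
    by (rule summable_on_cong_neutral) (auto simp: R1_def R2_def phi_def)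
  ultimately show ?thesis by simp
qed

lemma sums_has_sum_nat:
  fixes f :: "nat \<Rightarrow> real"
  assumes "f summable_on UNIV" "f sums s"
  shows "(f has_sum s) UNIV"
proof -
  have "(f has_sum infsum f UNIV) UNIV" using assms(1) by simp
  moreover from this have "f sums infsum f UNIV" by (rule has_sum_imp_sums)
  ultimately show ?thesis using assms(2) sums_unique2 by metis
qed

definition Gs :: "nat \<Rightarrow> real" where
  "Gs s = (\<Sum>k. (-1)^k / real (Suc k)^s * altH 1 (Suc k))"

lemma outer1:
  fixes b :: nat
  defines "s \<equiv> 2*b+2"
  shows "(\<lambda>i. 1/real (Suc i)^(2*b+2) * (ln 2 + (-1)^i * (ln 2 - altH 1 i)/2 + (-1)^i * (ln 2 - altH 1 (Suc i))/2 - 3/4 * (-1)^i / real (Suc i)))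
     sums (ln 2 * zetaN s + ln 2 * altzetaN s - Gs s + 1/2 * zetaN (s+1) - 3/4 * altzetaN (s+1))"
proof -
  have s2: "s \<ge> 2" unfolding s_def by simp
  have G: "(\<lambda>k. (-1)^k / real (Suc k)^s * altH 1 (Suc k)) sums Gs s"
    unfolding Gs_def using stepA(1)[OF s2] by (simp add: summable_sums)
  have tot: "(\<lambda>i. ln 2 * (1 / real (Suc i)^s) + ln 2 * ((-1)^i / real (Suc i)^s)
      - (-1)^i / real (Suc i)^s * altH 1 (Suc i) + 1/2 * (1 / real (Suc i)^(s+1)) - 3/4 * ((-1)^i / real (Suc i)^(s+1)))
     sums (ln 2 * zetaN s + ln 2 * altzetaN s - Gs s + 1/2 * zetaN (s+1) - 3/4 * altzetaN (s+1))"
    by (intro sums_add sums_diff sums_mult G zeta_sums eta_sums) (use s2 in auto)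
  have eq: "1/real (Suc i)^(2*b+2) * (ln 2 + (-1)^i * (ln 2 - altH 1 i)/2 + (-1)^i * (ln 2 - altH 1 (Suc i))/2 - 3/4 * (-1)^i / real (Suc i))
     = ln 2 * (1 / real (Suc i)^s) + ln 2 * ((-1)^i / real (Suc i)^s)
      - (-1)^i / real (Suc i)^s * altH 1 (Suc i) + 1/2 * (1 / real (Suc i)^(s+1)) - 3/4 * ((-1)^i / real (Suc i)^(s+1))" for i
  proof -
    define K where "K = real (Suc i)"
    define x where "x = (-1::real)^i"
    define h where "h = altH 1 (Suc i)"
    have Kp: "K > 0" unfolding K_def by simp
    have xx: "x * x = 1" unfolding x_def using neg1_sq by simp
    have hi: "altH 1 i = h - x / K" unfolding h_def x_def K_def altH1_Suc by simp
    have "1/K^s * (ln 2 + x * (ln 2 - (h - x/K))/2 + x * (ln 2 - h)/2 - 3/4 * x / K)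
        = ln 2 * (1 / K^s) + ln 2 * (x / K^s) - x / K^s * h + 1/2 * (1 / K^(s+1)) - 3/4 * (x / K^(s+1))"
      using Kp xx by (simp add: field_simps power_add)
    then show ?thesis unfolding K_def[symmetric] x_def[symmetric] h_def[symmetric] hi s_def[symmetric] .
  qed
  show ?thesis using tot unfolding eq[symmetric] .
qed

lemma outer2:
  fixes b :: nat
  shows "(\<lambda>j. (-1)^(Suc j) / real (Suc j) * ((\<Sum>c<b. zetaN (2*c+2) / real (Suc j)^(2*(b-c))) - (real b + 3/4) / real (Suc j)^(2*b+2)))
     sums ((\<Sum>c<b. zetaN (2*c+2) * (- altzetaN (2*(b-c)+1))) - (real b + 3/4) * (- altzetaN (2*b+3)))"
proof -
  have tot: "(\<lambda>j. (\<Sum>c<b. zetaN (2*c+2) * ((-1)^(Suc j) / real (Suc j)^(2*(b-c)+1))) - (real b + 3/4) * ((-1)^(Suc j) / real (Suc j)^(2*b+3)))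
     sums ((\<Sum>c<b. zetaN (2*c+2) * (- altzetaN (2*(b-c)+1))) - (real b + 3/4) * (- altzetaN (2*b+3)))"
    by (intro sums_diff sums_sum sums_mult eta_sums') auto
  have eq: "(-1)^(Suc j) / real (Suc j) * ((\<Sum>c<b. zetaN (2*c+2) / real (Suc j)^(2*(b-c))) - (real b + 3/4) / real (Suc j)^(2*b+2))
     = (\<Sum>c<b. zetaN (2*c+2) * ((-1)^(Suc j) / real (Suc j)^(2*(b-c)+1))) - (real b + 3/4) * ((-1)^(Suc j) / real (Suc j)^(2*b+3))" for j
  proof -
    define M where "M = real (Suc j)"
    define x where "x = (-1::real)^(Suc j)"
    have Mp: "M > 0" unfolding M_def by simp
    have "x / M * ((\<Sum>c<b. zetaN (2*c+2) / M^(2*(b-c))) - (real b + 3/4) / M^(2*b+2))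
     = (\<Sum>c<b. zetaN (2*c+2) * (x / M^(2*(b-c)+1))) - (real b + 3/4) * (x / M^(2*b+3))"
    proof -
      have p1: "M^(2*(b-c)+1) = M^(2*(b-c)) * M" for c by simp
      have e3: "2*b+3 = Suc (2*b+2)" by simp
      have p2: "M^(2*b+3) = M^(2*b+2) * M" unfolding e3 by (rule power_Suc2)
      show ?thesis unfolding p1 p2 using Mp
        by (simp add: sum_distrib_left sum_divide_distrib right_diff_distrib diff_divide_distrib mult_ac)
    qed
    then show ?thesis unfolding M_def x_def .
  qed
  show ?thesis using tot unfolding eq[symmetric] .
qed

lemma double_sum_eq:
  fixes b :: nat
  defines "s \<equiv> 2*b+2"
  shows "ln 2 * zetaN s + ln 2 * altzetaN s - Gs s + 1/2 * zetaN (s+1) - 3/4 * altzetaN (s+1)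
       = (\<Sum>c<b. zetaN (2*c+2) * (- altzetaN (2*(b-c)+1))) - (real b + 3/4) * (- altzetaN (2*b+3))"
proof -
  define T where "T = infsum (\<lambda>(i,j). phi b i j) (UNIV \<times> UNIV)"
  have sm: "(\<lambda>(i,j). phi b i j) summable_on (UNIV \<times> UNIV)" by (rule phi_summable)
  have hT: "((\<lambda>(i,j). phi b i j) has_sum T) (UNIV \<times> UNIV)" unfolding T_def using sm by simp
  define I1 where "I1 i = 1/real (Suc i)^(2*b+2) * (ln 2 + (-1)^i * (ln 2 - altH 1 i)/2 + (-1)^i * (ln 2 - altH 1 (Suc i))/2 - 3/4 * (-1)^i / real (Suc i))" for i
  define I2 where "I2 j = (-1)^(Suc j) / real (Suc j) * ((\<Sum>c<b. zetaN (2*c+2) / real (Suc j)^(2*(b-c))) - (real b + 3/4) / real (Suc j)^(2*b+2))" for j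
  have f1: "((\<lambda>j. (\<lambda>(i,j). phi b i j) (i,j)) has_sum I1 i) UNIV" for i
  proof -
    have "phi b i summable_on UNIV" using summable_on_SigmaD1[OF sm] by simp
    moreover have "phi b i sums I1 i"
      using fiberI[of i b] unfolding I1_def phi_def by simp
    ultimately show ?thesis by (simp add: sums_has_sum_nat)
  qed
  have "(I1 has_sum T) UNIV" by (rule has_sum_Sigma'[OF hT f1])
  then have "I1 sums T" by (rule has_sum_imp_sums)
  moreover have "I1 sums (ln 2 * zetaN s + ln 2 * altzetaN s - Gs s + 1/2 * zetaN (s+1) - 3/4 * altzetaN (s+1))"
    unfolding I1_def s_def by (rule outer1)
  ultimately have T1: "T = ln 2 * zetaN s + ln 2 * altzetaN s - Gs s + 1/2 * zetaN (s+1) - 3/4 * altzetaN (s+1)"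
    by (rule sums_unique2)
  have hT': "((\<lambda>(j,i). phi b i j) has_sum T) (UNIV \<times> UNIV)"
    using has_sum_swap[THEN iffD1, OF hT] by simp
  have sm': "(\<lambda>(j,i). phi b i j) summable_on (UNIV \<times> UNIV)"
    using hT' summable_on_def by blast
  have f2: "((\<lambda>i. (\<lambda>(j,i). phi b i j) (j,i)) has_sum I2 j) UNIV" for j
  proof -
    have "(\<lambda>i. phi b i j) summable_on UNIV" using summable_on_SigmaD1[of "\<lambda>j i. phi b i j", OF sm'] by simp
    moreover have "(\<lambda>i. phi b i j) sums I2 j"
      using fiberII[of j b] unfolding I2_def phi_def by (simp add: eq_commute)
    ultimately show ?thesis by (simp add: sums_has_sum_nat)
  qed
  have "(I2 has_sum T) UNIV" by (rule has_sum_Sigma'[OF hT' f2])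
  then have "I2 sums T" by (rule has_sum_imp_sums)
  moreover have "I2 sums ((\<Sum>c<b. zetaN (2*c+2) * (- altzetaN (2*(b-c)+1))) - (real b + 3/4) * (- altzetaN (2*b+3)))"
    unfolding I2_def by (rule outer2)
  ultimately have T2: "T = (\<Sum>c<b. zetaN (2*c+2) * (- altzetaN (2*(b-c)+1))) - (real b + 3/4) * (- altzetaN (2*b+3))"
    by (rule sums_unique2)
  show ?thesis using T1 T2 by simp
qed

lemma reindex_final:
  "(\<Sum>c<b. zetaN (2*c+2) * altzetaN (2*(b-c)+1)) =
   (\<Sum>j=1..Suc b - 1. altzetaN (2 * j + 1) * zetaN (2 * Suc b - 2 * j))"
proof -
  have "(\<Sum>c<b. zetaN (2*c+2) * altzetaN (2*(b-c)+1)) =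
        (\<Sum>c<b. zetaN (2*(b - Suc c)+2) * altzetaN (2*(b-(b - Suc c))+1))"
    using sum.atLeastLessThan_rev[of "\<lambda>c. zetaN (2*c+2) * altzetaN (2*(b-c)+1)" 0 b]
    by (simp add: atLeast0LessThan)
  also have "\<dots> = (\<Sum>c<b. altzetaN (2 * Suc c + 1) * zetaN (2 * Suc b - 2 * Suc c))"
  proof (rule sum.cong)
    fix c assume "c \<in> {..<b}"
    then have c: "c < b" by simp
    then have e1: "2*(b - Suc c)+2 = 2 * Suc b - 2 * Suc c" and e2: "b - (b - Suc c) = Suc c" by auto
    show "zetaN (2*(b - Suc c)+2) * altzetaN (2*(b-(b - Suc c))+1) = altzetaN (2 * Suc c + 1) * zetaN (2 * Suc b - 2 * Suc c)"
      unfolding e1 e2 by simp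
  qed simp
  also have "\<dots> = (\<Sum>j=1..b. altzetaN (2 * j + 1) * zetaN (2 * Suc b - 2 * j))"
    using sum.atLeast1_atMost_eq[of "\<lambda>j. altzetaN (2 * j + 1) * zetaN (2 * Suc b - 2 * j)" b] by simp
  finally show ?thesis by simp
qed

theorem mainTheorem8:
  fixes a :: nat
  assumes "a \<ge> 1"
  shows "(\<lambda>m. (-1) ^ (Suc m) * altH (2 * a) m / real (Suc m)) sums
           (zetaN (2 * a + 1) / 2 - (real a + 1 / 2) * altzetaN (2 * a + 1)
            + ln 2 * zetaN (2 * a)
            + (\<Sum>j=1..a-1. altzetaN (2 * j + 1) * zetaN (2 * a - 2 * j)))"
proof -
  obtain b where a: "a = Suc b" using assms by (cases a) auto
  have s: "2 * a = 2*b+2" unfolding a by simp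
  have s2: "2 * a \<ge> 2" using assms by simp
  have A: "(\<lambda>m. (-1) ^ (Suc m) * altH (2 * a) m / real (Suc m)) sums (Gs (2*a) - ln 2 * altzetaN (2*a))"
    using stepA(2)[OF s2] unfolding Gs_def .
  have D: "ln 2 * zetaN (2*a) + ln 2 * altzetaN (2*a) - Gs (2*a) + 1/2 * zetaN (2*a+1) - 3/4 * altzetaN (2*a+1)
       = (\<Sum>c<b. zetaN (2*c+2) * (- altzetaN (2*(b-c)+1))) - (real b + 3/4) * (- altzetaN (2*b+3))"
    using double_sum_eq[of b] unfolding s .
  have R: "(\<Sum>c<b. zetaN (2*c+2) * (- altzetaN (2*(b-c)+1))) = - (\<Sum>j=1..a-1. altzetaN (2 * j + 1) * zetaN (2 * a - 2 * j))"
    using reindex_final[of b] unfolding a by (simp add: sum_negf)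
  have e3: "2*b+3 = 2*a+1" unfolding a by simp
  have "Gs (2*a) - ln 2 * altzetaN (2*a) = zetaN (2 * a + 1) / 2 - (real a + 1 / 2) * altzetaN (2 * a + 1)
            + ln 2 * zetaN (2 * a)
            + (\<Sum>j=1..a-1. altzetaN (2 * j + 1) * zetaN (2 * a - 2 * j))"
    using D unfolding R e3 by (simp add: a algebra_simps)
  then show ?thesis using A by simp
qed

end
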